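(* Let $E$ be a Banach lattice. Then the identity operator on $E$ is $uaw$-Dunford-Pettis if and only if $E$ is finite dimensional.
   Context: A net $(x_\alpha)$ in a Banach lattice $E$ is $uaw$-convergent to $x$ if $|x_\alpha-x|\wedge u\to 0$ weakly for every $u\in E_+$. A bounded operator $T\colon E\to E$ is $uaw$-Dunford-Pettis if every norm bounded $uaw$-null sequence $(x_n)$ in $E$ satisfies $\|Tx_n\|\to 0$. *)

theory Defs
  imports "HOL-Analysis.Analysis"
begin

definition lmod :: "'a::{lattice, uminus} \<Rightarrow> 'a" where
  "lmod x = sup x (- x)"

class banach_lattice = banach + ordered_real_vector + lattice +
  assumes norm_lattice_mono: "sup x (- x) \<le> sup y (- y) \<Longrightarrow> norm x \<le> norm y"

definition weakly_tendsto :: "(nat \<Rightarrow> 'a::real_normed_vector) \<Rightarrow> 'a \<Rightarrow> bool" where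
  "weakly_tendsto x l \<longleftrightarrow>
     (\<forall>f :: 'a \<Rightarrow> real. bounded_linear f \<longrightarrow> (\<lambda>n. f (x n)) \<longlonglongrightarrow> f l)"

definition uaw_tendsto :: "(nat \<Rightarrow> 'a::banach_lattice) \<Rightarrow> 'a \<Rightarrow> bool" where
  "uaw_tendsto x l \<longleftrightarrow>
     (\<forall>u. 0 \<le> u \<longrightarrow> weakly_tendsto (\<lambda>n. inf (lmod (x n - l)) u) 0)"

definition uaw_dunford_pettis :: "('a::banach_lattice \<Rightarrow> 'a) \<Rightarrow> bool" where
  "uaw_dunford_pettis T \<longleftrightarrow> bounded_linear T \<and>
     (\<forall>x :: nat \<Rightarrow> 'a. bounded (range x) \<longrightarrow> uaw_tendsto x 0 \<longrightarrow>
        (\<lambda>n. norm (T (x n))) \<longlonglongrightarrow> 0)"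

definition fin_dim_space :: "'a::real_vector itself \<Rightarrow> bool" where
  "fin_dim_space _ \<longleftrightarrow> (\<exists>B :: 'a set. finite B \<and> span B = UNIV)"

end

theory Submission
  imports Defs "HOL-Library.Lattice_Algebras"
begin


instance banach_lattice \<subseteq> lattice_ab_group_add ..

lemma lmod_pos: "0 \<le> (x::'a::banach_lattice) \<Longrightarrow> lmod x = x"
  unfolding lmod_def by (rule sup_absorb1) (meson neg_le_0_iff_le order.trans)

lemma lmod_ge1: "(x::'a::banach_lattice) \<le> lmod x" unfolding lmod_def by simp
lemma lmod_ge2: "- (x::'a::banach_lattice) \<le> lmod x" unfolding lmod_def by simp
lemma lmod_nonneg: "0 \<le> lmod (x::'a::banach_lattice)"
proof -
  have "x + (- x) \<le> lmod x + lmod x" by (intro add_mono lmod_ge1 lmod_ge2)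
  then show ?thesis by simp
qed

lemma norm_mono_pos:
  fixes a b :: "'a::banach_lattice"
  assumes "0 \<le> a" "a \<le> b" shows "norm a \<le> norm b"
proof -
  have "0 \<le> b" using assms by simp
  then show ?thesis using norm_lattice_mono[of a b] assms lmod_pos[of a] lmod_pos[of b]
    unfolding lmod_def by simp
qed

lemma norm_lmod: "norm (lmod (x::'a::banach_lattice)) = norm x"
proof -
  have e: "lmod (lmod x) = lmod x" by (rule lmod_pos[OF lmod_nonneg])
  have 1: "norm x \<le> norm (lmod x)"
    by (rule norm_lattice_mono) (metis e lmod_def order_refl)
  have 2: "norm (lmod x) \<le> norm x"
    by (rule norm_lattice_mono) (metis e lmod_def order_refl)
  show ?thesis using 1 2 by simp
qed

lemma lmod_le_norm:
  fixes x y :: "'a::banach_lattice"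
  assumes "lmod x \<le> lmod y" shows "norm x \<le> norm y"
  using norm_lattice_mono[of x y] assms unfolding lmod_def by simp

lemma inf_scale:
  fixes p q :: "'a::banach_lattice"
  assumes c: "0 \<le> c" shows "inf (c *\<^sub>R p) (c *\<^sub>R q) = c *\<^sub>R inf p q"
proof (cases "c = 0")
  case True then show ?thesis by simp
next
  case False
  then have cp: "0 < c" using c by simp
  show ?thesis
  proof (rule antisym)
    have "(1/c) *\<^sub>R inf (c *\<^sub>R p) (c *\<^sub>R q) \<le> (1/c) *\<^sub>R (c *\<^sub>R p)"
      by (rule scaleR_left_mono) (use cp in auto)
    then have 1: "(1/c) *\<^sub>R inf (c *\<^sub>R p) (c *\<^sub>R q) \<le> p" using cp by simp
    have "(1/c) *\<^sub>R inf (c *\<^sub>R p) (c *\<^sub>R q) \<le> (1/c) *\<^sub>R (c *\<^sub>R q)"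
      by (rule scaleR_left_mono) (use cp in auto)
    then have 2: "(1/c) *\<^sub>R inf (c *\<^sub>R p) (c *\<^sub>R q) \<le> q" using cp by simp
    have "(1/c) *\<^sub>R inf (c *\<^sub>R p) (c *\<^sub>R q) \<le> inf p q" using 1 2 by simp
    then have "c *\<^sub>R ((1/c) *\<^sub>R inf (c *\<^sub>R p) (c *\<^sub>R q)) \<le> c *\<^sub>R inf p q"
      by (rule scaleR_left_mono) (use cp in auto)
    then show "inf (c *\<^sub>R p) (c *\<^sub>R q) \<le> c *\<^sub>R inf p q" using cp by simp
  next
    show "c *\<^sub>R inf p q \<le> inf (c *\<^sub>R p) (c *\<^sub>R q)"
      using c by (simp add: scaleR_left_mono)
  qed
qed

lemma disj_scale:
  fixes p q :: "'a::banach_lattice"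
  assumes "0 \<le> a" "0 \<le> b" "0 \<le> p" "0 \<le> q" "inf p q = 0"
  shows "inf (a *\<^sub>R p) (b *\<^sub>R q) = 0"
proof (rule antisym)
  let ?m = "max a b"
  have "inf (a *\<^sub>R p) (b *\<^sub>R q) \<le> inf (?m *\<^sub>R p) (?m *\<^sub>R q)"
    using assms by (intro inf_mono scaleR_right_mono) auto
  also have "\<dots> = 0" using assms by (simp add: inf_scale)
  finally show "inf (a *\<^sub>R p) (b *\<^sub>R q) \<le> 0" .
  show "0 \<le> inf (a *\<^sub>R p) (b *\<^sub>R q)" using assms by (simp add: scaleR_nonneg_nonneg)
qed

lemma inf_add_le:
  fixes p q r :: "'a::banach_lattice"
  assumes "0 \<le> p" "0 \<le> q" "0 \<le> r"
  shows "inf (p + q) r \<le> inf p r + inf q r"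
proof -
  have a: "inf p r + inf q r = inf (p + inf q r) (r + inf q r)"
    by (rule add_inf_distrib_right)
  have b: "p + inf q r = inf (p + q) (p + r)" by (rule add_inf_distrib_left)
  have c: "r + inf q r = inf (r + q) (r + r)" by (rule add_inf_distrib_left)
  have "inf p r + inf q r = inf (inf (p + q) (p + r)) (inf (r + q) (r + r))"
    using a b c by simp
  moreover have "inf (p + q) r \<le> inf (inf (p + q) (p + r)) (inf (r + q) (r + r))"
    using assms by (auto intro: le_infI2 add_increasing add_increasing2)
  ultimately show ?thesis by simp
qed

lemma disj_add:
  fixes p q r :: "'a::banach_lattice"
  assumes "0 \<le> p" "0 \<le> q" "0 \<le> r" "inf p r = 0" "inf q r = 0"
  shows "inf (p + q) r = 0"
  using inf_add_le[OF assms(1-3)] assms by (simp add: antisym)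

lemma disj_sum:
  fixes f :: "'b \<Rightarrow> 'a::banach_lattice"
  assumes "finite B" "\<And>b. b \<in> B \<Longrightarrow> 0 \<le> f b" "\<And>b. b \<in> B \<Longrightarrow> inf (f b) r = 0" "0 \<le> r"
  shows "inf (sum f B) r = 0"
  using assms
proof (induction B rule: finite_induct)
  case empty then show ?case by (simp add: inf_absorb1)
next
  case (insert c B)
  then show ?case by (simp add: disj_add sum_nonneg)
qed

lemma disj_sum_le:
  fixes f :: "'b \<Rightarrow> 'a::banach_lattice"
  assumes "finite B" "\<And>b. b \<in> B \<Longrightarrow> 0 \<le> f b" "\<And>b. b \<in> B \<Longrightarrow> f b \<le> x"
    "\<And>b c. b \<in> B \<Longrightarrow> c \<in> B \<Longrightarrow> b \<noteq> c \<Longrightarrow> inf (f b) (f c) = 0" "0 \<le> x"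
  shows "sum f B \<le> x"
  using assms
proof (induction B rule: finite_induct)
  case empty then show ?case by simp
next
  case (insert c B)
  have d: "inf (sum f B) (f c) = 0"
    using insert by (intro disj_sum) auto
  have "sum f (insert c B) = sum f B + f c" using insert by (simp add: add.commute)
  also have "\<dots> = sup (sum f B) (f c)" using add_eq_inf_sup[of "sum f B" "f c"] d by simp
  also have "\<dots> \<le> x" using insert by simp
  finally show ?case .
qed

lemma pos_neg_decomp: "(x::'a::banach_lattice) = sup x 0 - sup (- x) 0"
proof -
  have "x + sup 0 (- x) = sup x 0" by (simp add: add_sup_distrib_left)
  then show ?thesis by (metis add_diff_cancel sup_commute)
qed

lemma pos_neg_disj: "inf (sup (z::'a::banach_lattice) 0) (sup (- z) 0) = 0"
proof -
  have 1: "sup z 0 = z + sup (- z) 0" by (simp add: add_sup_distrib_left sup_commute)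
  have 2: "inf (z + sup (- z) 0) (0 + sup (- z) 0) = inf z 0 + sup (- z) 0"
    by (rule add_inf_distrib_right[symmetric])
  have 3: "inf z 0 = - sup (- z) 0" using inf_eq_neg_sup[of z 0] by simp
  have "inf (sup z 0) (sup (- z) 0) = inf z 0 + sup (- z) 0"
    using 2 by (simp only: 1[symmetric] add_0_left)
  also have "\<dots> = 0" by (simp only: 3 left_minus)
  finally show ?thesis .
qed

lemma archimedean_pos:
  fixes e z :: "'a::banach_lattice"
  assumes e: "0 \<le> e" and h: "\<And>\<epsilon>. \<epsilon> > 0 \<Longrightarrow> - (\<epsilon> *\<^sub>R e) \<le> z"
  shows "0 \<le> z"
proof -
  let ?w = "sup (- z) 0"
  have w0: "0 \<le> ?w" by simp
  have wle: "norm ?w \<le> \<epsilon> * norm e" if "\<epsilon> > 0" for \<epsilon>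
  proof -
    have "?w \<le> \<epsilon> *\<^sub>R e" using h[OF that] e that
      by (auto intro!: sup_least scaleR_nonneg_nonneg simp: minus_le_iff)
    then have "norm ?w \<le> norm (\<epsilon> *\<^sub>R e)" by (rule norm_mono_pos[OF w0])
    then show ?thesis using that by simp
  qed
  have "norm ?w = 0"
  proof (rule ccontr)
    assume "norm ?w \<noteq> 0"
    then have pos: "norm ?w > 0" by simp
    define \<epsilon> where "\<epsilon> = norm ?w / (norm e + 1)"
    have ne: "norm e + 1 > 0" using norm_ge_zero[of e] by linarith
    have ep: "\<epsilon> > 0" using pos ne unfolding \<epsilon>_def by (rule divide_pos_pos)
    have "\<epsilon> * norm e < norm ?w"
    proof -
      have "\<epsilon> * norm e < \<epsilon> * (norm e + 1)" using ep by simp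
      also have "\<dots> = norm ?w" unfolding \<epsilon>_def using ne by simp
      finally show ?thesis .
    qed
    with wle[OF ep] show False by simp
  qed
  then have "?w = 0" by simp
  then have "- z \<le> 0" by (metis sup_ge1)
  then show ?thesis by simp
qed



definition cf :: "'a::banach_lattice \<Rightarrow> 'a \<Rightarrow> real" where
  "cf e x = Sup {\<mu>. \<mu> *\<^sub>R e \<le> x}"

lemma cf_props:
  fixes x e :: "'a::banach_lattice"
  assumes x: "0 \<le> x" and e: "0 \<le> e" "e \<noteq> 0"
  shows "cf e x *\<^sub>R e \<le> x" "0 \<le> cf e x" "cf e x * norm e \<le> norm x"
    "\<And>\<mu>. \<mu> *\<^sub>R e \<le> x \<Longrightarrow> \<mu> \<le> cf e x"
proof -
  let ?S = "{\<mu>. \<mu> *\<^sub>R e \<le> x}"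
  have ne: "norm e > 0" using e by simp
  have bnd: "\<mu> \<le> norm x / norm e" if "\<mu> \<in> ?S" for \<mu>
  proof (cases "\<mu> \<le> 0")
    case True then show ?thesis using ne by (smt (verit) divide_nonneg_pos norm_ge_zero)
  next
    case False
    then have "0 \<le> \<mu> *\<^sub>R e" using e by (simp add: scaleR_nonneg_nonneg)
    then have "norm (\<mu> *\<^sub>R e) \<le> norm x" using that by (intro norm_mono_pos) auto
    then have "\<mu> * norm e \<le> norm x" using False by simp
    then show ?thesis using ne by (simp add: pos_le_divide_eq)
  qed
  have bdd: "bdd_above ?S" using bnd by (intro bdd_aboveI) auto
  have z: "0 \<in> ?S" using x by simp
  then have nemp: "?S \<noteq> {}" by blast
  show upper: "\<And>\<mu>. \<mu> *\<^sub>R e \<le> x \<Longrightarrow> \<mu> \<le> cf e x"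
    unfolding cf_def using bdd by (intro cSup_upper) auto
  show c0: "0 \<le> cf e x" using upper[of 0] x by simp
  show mem: "cf e x *\<^sub>R e \<le> x"
  proof -
    have "0 \<le> x - cf e x *\<^sub>R e"
    proof (rule archimedean_pos[OF e(1)])
      fix \<epsilon> :: real assume ep: "\<epsilon> > 0"
      have "cf e x - \<epsilon> < Sup ?S" using ep unfolding cf_def by simp
      then obtain s where s: "s \<in> ?S" "cf e x - \<epsilon> < s" using less_cSupE[OF _ nemp] by blast
      have "(cf e x - \<epsilon>) *\<^sub>R e \<le> s *\<^sub>R e" using s(2) e by (intro scaleR_right_mono) auto
      also have "\<dots> \<le> x" using s(1) by simp
      finally have "(cf e x - \<epsilon>) *\<^sub>R e \<le> x" .
      then show "- (\<epsilon> *\<^sub>R e) \<le> x - cf e x *\<^sub>R e" by (simp add: algebra_simps)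
    qed
    then show ?thesis by simp
  qed
  show "cf e x * norm e \<le> norm x"
  proof -
    have "norm (cf e x *\<^sub>R e) \<le> norm x"
      using mem c0 e by (intro norm_mono_pos scaleR_nonneg_nonneg) auto
    then show ?thesis using c0 by simp
  qed
qed

lemma split_lemma:
  fixes x y :: "'a::banach_lattice"
  assumes y0: "0 \<le> y" and yx: "y \<le> x" and x0: "x \<noteq> 0" and nm: "\<And>c. y \<noteq> c *\<^sub>R x"
  shows "\<exists>a b. 0 \<le> a \<and> a \<le> x \<and> 0 \<le> b \<and> b \<le> x \<and> a \<noteq> 0 \<and> b \<noteq> 0 \<and> inf a b = 0"
proof -
  have xp: "0 \<le> x" using y0 yx by simp
  let ?l = "cf x y"
  note cp = cf_props[OF y0 xp x0]
  have "\<exists>l>?l. \<not> y \<le> l *\<^sub>R x"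
  proof (rule ccontr)
    assume "\<not> ?thesis"
    then have h: "\<And>l. l > ?l \<Longrightarrow> y \<le> l *\<^sub>R x" by auto
    have "0 \<le> ?l *\<^sub>R x - y"
    proof (rule archimedean_pos[OF xp])
      fix \<epsilon> :: real assume "\<epsilon> > 0"
      then have "y \<le> (?l + \<epsilon>) *\<^sub>R x" by (intro h) simp
      then show "- (\<epsilon> *\<^sub>R x) \<le> ?l *\<^sub>R x - y" by (simp add: algebra_simps)
    qed
    then have "y \<le> ?l *\<^sub>R x" by simp
    with cp(1) have "y = ?l *\<^sub>R x" by simp
    with nm show False by blast
  qed
  then obtain l where l: "l > ?l" "\<not> y \<le> l *\<^sub>R x" by blast
  have l0: "0 \<le> l" using l(1) cp(2) by simp
  have l1: "l \<le> 1"
  proof (rule ccontr)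
    assume "\<not> l \<le> 1"
    then have "x \<le> l *\<^sub>R x" using scaleR_right_mono[of 1 l x] xp by simp
    with yx l(2) show False by simp
  qed
  define a where "a = sup (y - l *\<^sub>R x) 0"
  define b where "b = sup (- (y - l *\<^sub>R x)) 0"
  have lx0: "0 \<le> l *\<^sub>R x" using l0 xp by (simp add: scaleR_nonneg_nonneg)
  have lxx: "l *\<^sub>R x \<le> x" using scaleR_right_mono[of l 1 x] xp l1 by simp
  have "inf a b = 0" unfolding a_def b_def by (rule pos_neg_disj)
  moreover have "0 \<le> a" "0 \<le> b" unfolding a_def b_def by simp_all
  moreover have "a \<le> x" unfolding a_def
  proof (rule sup_least)
    have "y - l *\<^sub>R x \<le> y" using lx0 by simp
    then show "y - l *\<^sub>R x \<le> x" using yx by (rule order_trans)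
  qed (rule xp)
  moreover have "b \<le> x" unfolding b_def
  proof (rule sup_least)
    have "- (y - l *\<^sub>R x) \<le> l *\<^sub>R x" using y0 by simp
    then show "- (y - l *\<^sub>R x) \<le> x" using lxx by (rule order_trans)
  qed (rule xp)
  moreover have "a \<noteq> 0"
  proof
    assume "a = 0"
    then have "y - l *\<^sub>R x \<le> 0" unfolding a_def by (metis sup_ge1)
    with l(2) show False by simp
  qed
  moreover have "b \<noteq> 0"
  proof
    assume "b = 0"
    then have "- (y - l *\<^sub>R x) \<le> 0" unfolding b_def by (metis sup_ge1)
    then have "l *\<^sub>R x \<le> y" by simp
    then have "l \<le> ?l" by (rule cp(4))
    with l(1) show False by simp
  qed
  ultimately show ?thesis by blast
qed

definition atom :: "'a::banach_lattice \<Rightarrow> bool" where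
  "atom e \<longleftrightarrow> 0 \<le> e \<and> e \<noteq> 0 \<and> (\<forall>y. 0 \<le> y \<and> y \<le> e \<longrightarrow> (\<exists>c. y = c *\<^sub>R e))"

definition has_disj_seq :: "'a::banach_lattice itself \<Rightarrow> bool" where
  "has_disj_seq _ \<longleftrightarrow> (\<exists>d :: nat \<Rightarrow> 'a. \<forall>n. 0 \<le> d n \<and> d n \<noteq> 0 \<and>
      (\<forall>m. m < n \<longrightarrow> inf (d m) (d n) = 0))"

lemma atom_below:
  fixes x :: "'a::banach_lattice"
  assumes nd: "\<not> has_disj_seq TYPE('a)" and x: "0 \<le> x" "x \<noteq> 0"
  shows "\<exists>e. atom e \<and> e \<le> x"
proof (rule ccontr)
  assume na: "\<not> ?thesis"
  define Q where "Q = (\<lambda>p a b. 0 \<le> a \<and> a \<le> p \<and> 0 \<le> (b::'a) \<and> b \<le> p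
      \<and> a \<noteq> 0 \<and> b \<noteq> 0 \<and> inf a b = 0)"
  have sp: "\<exists>a b. Q p a b" if "0 \<le> p" "p \<le> x" "p \<noteq> 0" for p
  proof -
    have "\<not> atom p" using na that by blast
    then have "\<not> (\<forall>y. 0 \<le> y \<and> y \<le> p \<longrightarrow> (\<exists>c. y = c *\<^sub>R p))"
      using that unfolding atom_def by simp
    then obtain y where y: "0 \<le> y" "y \<le> p" "\<And>c. y \<noteq> c *\<^sub>R p" by auto
    from split_lemma[OF y(1,2) that(3) y(3)] show ?thesis unfolding Q_def .
  qed
  have "\<forall>p. \<exists>a b. (0 \<le> p \<and> p \<le> x \<and> p \<noteq> 0) \<longrightarrow> Q p a b" using sp by blast
  then obtain fa fb where F: "\<And>p. 0 \<le> p \<Longrightarrow> p \<le> x \<Longrightarrow> p \<noteq> 0 \<Longrightarrow> Q p (fa p) (fb p)"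
    by metis
  define A where "A = rec_nat x (\<lambda>_ p. fa p)"
  have A0: "A 0 = x" and AS: "\<And>n. A (Suc n) = fa (A n)" unfolding A_def by simp_all
  have inv: "0 \<le> A n \<and> A n \<le> x \<and> A n \<noteq> 0" for n
  proof (induction n)
    case 0
    then show ?case using A0 x by simp
  next
    case (Suc n)
    then have "Q (A n) (fa (A n)) (fb (A n))" using F by blast
    then show ?case using Suc AS[of n] unfolding Q_def by auto
  qed
  have QA: "Q (A n) (fa (A n)) (fb (A n))" for n using F inv[of n] by blast
  define d where "d n = fb (A n)" for n
  have dle: "d n \<le> A n" "0 \<le> d n" "d n \<noteq> 0" "inf (A (Suc n)) (d n) = 0" "A (Suc n) \<le> A n" for n
    using QA[of n] AS[of n] unfolding d_def Q_def by auto
  have Amono: "A m \<le> A n" if "n \<le> m" for m n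
    using that
  proof (induction m)
    case 0 then show ?case by simp
  next
    case (Suc m)
    then show ?case using dle(5)[of m] by (cases "n = Suc m") auto
  qed
  have "has_disj_seq TYPE('a)"
    unfolding has_disj_seq_def
  proof (intro exI[of _ d] allI conjI impI)
    fix n m :: nat assume "m < n"
    have "inf (d m) (d n) \<le> inf (d m) (A (Suc m))"
      using dle(1)[of n] Amono[of "Suc m" n] \<open>m < n\<close> by (intro inf_mono) auto
    also have "\<dots> = 0" using dle(4)[of m] by (simp add: inf_commute)
    finally show "inf (d m) (d n) = 0" using dle(2)[of m] dle(2)[of n] by (simp add: antisym)
  next
    fix n :: nat show "0 \<le> d n" "d n \<noteq> 0" using dle by auto
  qed
  with nd show False by simp
qed



definition pdisj :: "'a::banach_lattice set \<Rightarrow> bool" where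
  "pdisj A \<longleftrightarrow> (\<forall>a\<in>A. \<forall>b\<in>A. a \<noteq> b \<longrightarrow> inf a b = 0)"

lemma max_family:
  assumes nd: "\<not> has_disj_seq TYPE('a::banach_lattice)"
  shows "\<exists>A :: 'a set. finite A \<and> (\<forall>a\<in>A. atom a) \<and> pdisj A \<and> (\<forall>e. atom e \<longrightarrow> (\<exists>a\<in>A. inf e a \<noteq> 0))"
proof (rule ccontr)
  assume nt: "\<not> ?thesis"
  define Q where "Q = (\<lambda>A :: 'a set. finite A \<and> (\<forall>a\<in>A. atom a) \<and> pdisj A)"
  have H: "\<exists>e. Q A \<longrightarrow> atom e \<and> (\<forall>a\<in>A. inf e a = 0)" for A :: "'a set"
  proof (cases "Q A")
    case True
    from nt have "\<forall>A :: 'a set. \<not> (finite A \<and> (\<forall>a\<in>A. atom a) \<and> pdisj A \<and> (\<forall>e. atom e \<longrightarrow> (\<exists>a\<in>A. inf e a \<noteq> 0)))"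
      by blast
    then have "\<not> (finite A \<and> (\<forall>a\<in>A. atom a) \<and> pdisj A \<and> (\<forall>e. atom e \<longrightarrow> (\<exists>a\<in>A. inf e a \<noteq> 0)))"
      by (rule spec)
    with True have "\<not> (\<forall>e. atom e \<longrightarrow> (\<exists>a\<in>A. inf e a \<noteq> 0))" unfolding Q_def by simp
    then show ?thesis by auto
  qed simp
  then have "\<forall>A. \<exists>e. Q A \<longrightarrow> atom e \<and> (\<forall>a\<in>A. inf e a = 0)" by simp
  from choice[OF this] obtain nx where nx': "\<forall>A. Q A \<longrightarrow> atom (nx A) \<and> (\<forall>a\<in>A. inf (nx A) a = 0)"
    by blast
  have nx: "\<And>A. Q A \<Longrightarrow> atom (nx A) \<and> (\<forall>a\<in>A. inf (nx A) a = 0)" using nx' by blast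
  define F where "F = rec_nat {} (\<lambda>_ A. insert (nx A) A)"
  have F0: "F 0 = {}" and FS: "\<And>n. F (Suc n) = insert (nx (F n)) (F n)" unfolding F_def by simp_all
  have QF: "Q (F n)" for n
  proof (induction n)
    case 0 then show ?case unfolding Q_def pdisj_def F0 by simp
  next
    case (Suc n)
    note N = nx[OF Suc]
    show ?case unfolding FS Q_def
    proof (intro conjI)
      show "finite (insert (nx (F n)) (F n))" using Suc unfolding Q_def by simp
      show "\<forall>a\<in>insert (nx (F n)) (F n). atom a" using Suc N unfolding Q_def by simp
      show "pdisj (insert (nx (F n)) (F n))"
        using Suc N unfolding Q_def pdisj_def by (auto simp: inf_commute)
    qed
  qed
  have Fmono: "F m \<subseteq> F n" if "m \<le> n" for m n
    using that
  proof (induction n)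
    case 0 then show ?case by simp
  next
    case (Suc n) then show ?case using FS[of n] by (cases "m = Suc n") auto
  qed
  define d where "d n = nx (F n)" for n
  have datom: "atom (d n)" for n using nx[OF QF[of n]] unfolding d_def by simp
  have "has_disj_seq TYPE('a)"
    unfolding has_disj_seq_def
  proof (intro exI[of _ d] allI conjI impI)
    fix n m :: nat assume "m < n"
    have "d m \<in> F (Suc m)" using FS[of m] unfolding d_def by simp
    then have "d m \<in> F n" using Fmono[of "Suc m" n] \<open>m < n\<close> by auto
    then have "inf (d n) (d m) = 0" using nx[OF QF[of n]] unfolding d_def by simp
    then show "inf (d m) (d n) = 0" by (simp add: inf_commute)
  next
    fix n :: nat show "0 \<le> d n" "d n \<noteq> 0" using datom[of n] unfolding atom_def by auto
  qed
  with nd show False by simp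
qed

lemma decomp:
  fixes A :: "'a::banach_lattice set"
  assumes nd: "\<not> has_disj_seq TYPE('a)" and fin: "finite A" and at: "\<forall>a\<in>A. atom a"
    and pd: "pdisj A" and mx: "\<forall>e. atom e \<longrightarrow> (\<exists>a\<in>A. inf e a \<noteq> 0)"
    and x: "0 \<le> x"
  shows "x = (\<Sum>a\<in>A. cf a x *\<^sub>R a)"
proof -
  have a0: "0 \<le> a" "a \<noteq> 0" if "a \<in> A" for a using at that unfolding atom_def by auto
  have below: "\<exists>a\<in>A. inf z a \<noteq> 0" if zz: "0 \<le> z" "z \<noteq> 0" for z
  proof -
    obtain e where e: "atom e" "e \<le> z" using atom_below[OF nd zz] by blast
    then obtain a where a: "a \<in> A" "inf e a \<noteq> 0" using mx by blast
    have "inf z a \<noteq> 0"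
    proof
      assume "inf z a = 0"
      then have "inf e a \<le> 0" using e(2) by (metis inf_mono order_refl)
      moreover have "0 \<le> inf e a" using e(1) a0[OF a(1)] unfolding atom_def by simp
      ultimately show False using a(2) by simp
    qed
    then show ?thesis using a by blast
  qed
  let ?t = "\<lambda>a. cf a x *\<^sub>R a"
  note cp = cf_props[OF x]
  have t0: "0 \<le> ?t a" if "a \<in> A" for a using cp(2)[OF a0[OF that]] a0[OF that] by (simp add: scaleR_nonneg_nonneg)
  have tx: "?t a \<le> x" if "a \<in> A" for a using cp(1)[OF a0[OF that]] .
  have td: "inf (?t a) (?t b) = 0" if "a \<in> A" "b \<in> A" "a \<noteq> b" for a b
    using pd that a0 cp(2) a0 unfolding pdisj_def by (intro disj_scale) auto
  let ?s = "\<Sum>a\<in>A. ?t a"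
  have sx: "?s \<le> x" using fin t0 tx td x by (intro disj_sum_le) auto
  show ?thesis
  proof (rule ccontr)
    assume ne: "x \<noteq> ?s"
    let ?z = "x - ?s"
    have z0: "0 \<le> ?z" "?z \<noteq> 0" using sx ne by auto
    obtain a where a: "a \<in> A" "inf ?z a \<noteq> 0" using below[OF z0] by blast
    have "0 \<le> inf ?z a" "inf ?z a \<le> a" using z0 a0[OF a(1)] by auto
    then obtain \<nu> where nu: "inf ?z a = \<nu> *\<^sub>R a" using at a(1) unfolding atom_def by blast
    have nupos: "0 < \<nu>"
    proof (rule ccontr)
      assume "\<not> 0 < \<nu>"
      then have "\<nu> *\<^sub>R a \<le> 0" using a0[OF a(1)] by (simp add: scaleR_nonpos_nonneg)
      then have "inf ?z a \<le> 0" using nu by simp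
      then have "inf ?z a = 0" using \<open>0 \<le> inf ?z a\<close> by (rule antisym)
      with a(2) show False by blast
    qed
    have nz: "\<nu> *\<^sub>R a \<le> ?z" using nu by (metis inf_le1)
    have "?t a \<le> ?s"
    proof -
      have "?s = ?t a + (\<Sum>b\<in>A - {a}. ?t b)" using fin a(1) by (simp add: sum.remove)
      moreover have "0 \<le> (\<Sum>b\<in>A - {a}. ?t b)" using t0 by (intro sum_nonneg) auto
      ultimately show ?thesis by simp
    qed
    from add_mono[OF this nz] have "(cf a x + \<nu>) *\<^sub>R a \<le> ?s + ?z" by (simp add: scaleR_add_left)
    then have "(cf a x + \<nu>) *\<^sub>R a \<le> x" by simp
    then have "cf a x + \<nu> \<le> cf a x" by (rule cp(4)[OF a0[OF a(1)]])
    with nupos show False by simp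
  qed
qed

lemma span_of_decomp:
  fixes A :: "'a::banach_lattice set"
  assumes fin: "finite A" and dec: "\<And>x. 0 \<le> x \<Longrightarrow> x = (\<Sum>a\<in>A. cf a x *\<^sub>R a)"
  shows "span A = UNIV"
proof -
  have pos: "x \<in> span A" if "0 \<le> x" for x
  proof -
    have "(\<Sum>a\<in>A. cf a x *\<^sub>R a) \<in> span A"
      by (intro span_sum span_scale span_base) auto
    then show ?thesis using dec[OF that] by simp
  qed
  have "x \<in> span A" for x
  proof -
    have "sup x 0 - sup (- x) 0 \<in> span A" by (intro span_diff pos) auto
    then show ?thesis using pos_neg_decomp[of x] by simp
  qed
  then show ?thesis by auto
qed



lemma lmod_sum_le:
  fixes y :: "'b \<Rightarrow> 'a::banach_lattice"
  assumes "finite S" "\<And>n. n \<in> S \<Longrightarrow> \<bar>c n\<bar> \<le> 1" "\<And>n. n \<in> S \<Longrightarrow> 0 \<le> y n"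
  shows "lmod (\<Sum>n\<in>S. c n *\<^sub>R y n) \<le> (\<Sum>n\<in>S. y n)"
proof -
  have 1: "(\<Sum>n\<in>S. c n *\<^sub>R y n) \<le> (\<Sum>n\<in>S. y n)"
  proof (rule sum_mono)
    fix n assume n: "n \<in> S"
    have "c n *\<^sub>R y n \<le> 1 *\<^sub>R y n" using assms(2,3)[OF n] by (intro scaleR_right_mono) auto
    then show "c n *\<^sub>R y n \<le> y n" by simp
  qed
  have 2: "- (\<Sum>n\<in>S. c n *\<^sub>R y n) \<le> (\<Sum>n\<in>S. y n)"
    unfolding sum_negf[symmetric]
  proof (rule sum_mono)
    fix n assume n: "n \<in> S"
    have "(- c n) *\<^sub>R y n \<le> 1 *\<^sub>R y n" using assms(2,3)[OF n] by (intro scaleR_right_mono) auto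
    then show "- (c n *\<^sub>R y n) \<le> y n" by simp
  qed
  show ?thesis unfolding lmod_def using 1 2 by simp
qed

lemma disj_weakly_null:
  fixes y :: "nat \<Rightarrow> 'a::banach_lattice"
  assumes y0: "\<And>n. 0 \<le> y n" and yu: "\<And>n. y n \<le> u"
    and dj: "\<And>m n. m < n \<Longrightarrow> inf (y m) (y n) = 0"
  shows "weakly_tendsto y 0"
  unfolding weakly_tendsto_def
proof (intro allI impI)
  fix f :: "'a \<Rightarrow> real" assume f: "bounded_linear f"
  obtain K where K: "K > 0" "\<And>x. norm (f x) \<le> norm x * K"
    using bounded_linear.pos_bounded[OF f] by blast
  have u0: "0 \<le> u" using y0[of 0] yu[of 0] by simp
  have part: "(\<Sum>k<N. \<bar>f (y k)\<bar>) \<le> norm u * K" for N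
  proof -
    let ?v = "\<Sum>k<N. sgn (f (y k)) *\<^sub>R y k"
    have fv: "f ?v = (\<Sum>k<N. \<bar>f (y k)\<bar>)"
    proof -
      have "f ?v = (\<Sum>k<N. sgn (f (y k)) * f (y k))"
        using bounded_linear.linear[OF f] by (simp add: linear_sum linear_scale o_def)
      also have "\<dots> = (\<Sum>k<N. \<bar>f (y k)\<bar>)"
        by (intro sum.cong refl) (simp add: abs_sgn mult.commute)
      finally show ?thesis .
    qed
    have "lmod ?v \<le> (\<Sum>k<N. y k)" by (rule lmod_sum_le) (auto simp: y0 sgn_real_def)
    also have "\<dots> \<le> u"
    proof (rule disj_sum_le)
      fix b c :: nat assume "b \<noteq> c"
      then show "inf (y b) (y c) = 0" using dj[of b c] dj[of c b]
        by (cases "b < c") (auto simp: inf_commute)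
    qed (auto simp: y0 yu u0)
    also have "\<dots> = lmod u" using lmod_pos[OF u0] by simp
    finally have "norm ?v \<le> norm u" by (rule lmod_le_norm)
    then have "norm (f ?v) \<le> norm u * K" using K(2)[of ?v] K(1)
      by (meson mult_right_mono less_imp_le order_trans)
    then show ?thesis using fv by simp
  qed
  have "summable (\<lambda>k. \<bar>f (y k)\<bar>)"
  proof (rule bounded_imp_summable)
    fix n show "(\<Sum>k\<le>n. \<bar>f (y k)\<bar>) \<le> norm u * K"
      using part[of "Suc n"] by (simp add: lessThan_Suc_atMost)
  qed simp
  then have "(\<lambda>k. \<bar>f (y k)\<bar>) \<longlonglongrightarrow> 0" by (rule summable_LIMSEQ_zero)
  then have "(\<lambda>k. f (y k)) \<longlonglongrightarrow> 0" by (simp add: tendsto_rabs_zero_iff)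
  then show "(\<lambda>k. f (y k)) \<longlonglongrightarrow> f 0" using linear_0[OF bounded_linear.linear[OF f]] by simp
qed

lemma dp_no_disj:
  assumes H: "uaw_dunford_pettis (id :: 'a::banach_lattice \<Rightarrow> 'a)"
  shows "\<not> has_disj_seq TYPE('a)"
proof
  assume "has_disj_seq TYPE('a)"
  then obtain d :: "nat \<Rightarrow> 'a" where d: "\<And>n. 0 \<le> d n" "\<And>n. d n \<noteq> 0"
    "\<And>m n. m < n \<Longrightarrow> inf (d m) (d n) = 0"
    unfolding has_disj_seq_def by blast
  define x where "x n = (1 / norm (d n)) *\<^sub>R d n" for n
  have x0: "0 \<le> x n" for n unfolding x_def using d(1)[of n] by (simp add: scaleR_nonneg_nonneg)
  have xn: "norm (x n) = 1" for n unfolding x_def using d(2)[of n] by simp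
  have xd: "inf (x m) (x n) = 0" if "m < n" for m n
    unfolding x_def using d(1)[of m] d(1)[of n] d(3)[OF that] by (intro disj_scale) auto
  have bd: "bounded (range x)" using xn by (intro boundedI) auto
  have uaw: "uaw_tendsto x 0"
    unfolding uaw_tendsto_def
  proof (intro allI impI)
    fix u :: 'a assume u: "0 \<le> u"
    have e: "inf (lmod (x n - 0)) u = inf (x n) u" for n using lmod_pos[OF x0[of n]] by simp
    show "weakly_tendsto (\<lambda>n. inf (lmod (x n - 0)) u) 0"
      unfolding e
    proof (rule disj_weakly_null)
      fix n show "0 \<le> inf (x n) u" using x0[of n] u by simp
      show "inf (x n) u \<le> u" by simp
    next
      fix m n :: nat assume "m < n"
      have "inf (inf (x m) u) (inf (x n) u) \<le> inf (x m) (x n)" by (intro inf_mono) auto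
      then have "inf (inf (x m) u) (inf (x n) u) \<le> 0" using xd[OF \<open>m < n\<close>] by simp
      moreover have "0 \<le> inf (inf (x m) u) (inf (x n) u)" using x0[of m] x0[of n] u by simp
      ultimately show "inf (inf (x m) u) (inf (x n) u) = 0" by (rule antisym)
    qed
  qed
  have "(\<lambda>n. norm (id (x n))) \<longlonglongrightarrow> 0" using H bd uaw unfolding uaw_dunford_pettis_def by blast
  then have "(\<lambda>n. 1::real) \<longlonglongrightarrow> 0" using xn by simp
  then show False by (simp add: LIMSEQ_const_iff)
qed



lemma pdisj_independent:
  fixes A :: "'a::banach_lattice set"
  assumes a0: "\<And>a. a \<in> A \<Longrightarrow> 0 \<le> a \<and> a \<noteq> 0" and pd: "pdisj A"
  shows "independent A"
  unfolding independent_explicit_finite_subsets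
proof (intro allI impI ballI)
  fix S u v
  assume SA: "S \<subseteq> A" and fin: "finite S" and sum0: "(\<Sum>v\<in>S. u v *\<^sub>R v) = 0" and v: "v \<in> S"
  define p where "p w = max (u w) 0" for w
  define q where "q w = max (- u w) 0" for w
  have pq: "u w = p w - q w" for w unfolding p_def q_def by auto
  have p0: "0 \<le> p w" "0 \<le> q w" for w unfolding p_def q_def by auto
  have pq0: "p w = 0 \<or> q w = 0" for w unfolding p_def q_def by auto
  let ?P = "\<Sum>w\<in>S. p w *\<^sub>R w" and ?Q = "\<Sum>w\<in>S. q w *\<^sub>R w"
  have w0: "0 \<le> w" "w \<noteq> 0" if "w \<in> S" for w using a0 SA that by auto
  have tp: "0 \<le> p w *\<^sub>R w" "0 \<le> q w *\<^sub>R w" if "w \<in> S" for w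
    using w0[OF that] p0 by (auto intro: scaleR_nonneg_nonneg)
  have P0: "0 \<le> ?P" "0 \<le> ?Q" using tp by (auto intro: sum_nonneg)
  have "?P - ?Q = (\<Sum>w\<in>S. u w *\<^sub>R w)"
    by (simp add: pq scaleR_diff_left sum_subtractf)
  then have PQ: "?P = ?Q" using sum0 by simp
  have cross: "inf (p w *\<^sub>R w) (q w' *\<^sub>R w') = 0" if "w \<in> S" "w' \<in> S" for w w'
  proof (cases "w = w'")
    case True
    then show ?thesis using pq0[of w] tp that by (auto simp: inf_absorb1 inf_absorb2)
  next
    case False
    then show ?thesis using pd SA that w0 p0 unfolding pdisj_def by (intro disj_scale) auto
  qed
  have "inf ?P ?Q = 0"
  proof (rule disj_sum[OF fin])
    fix w assume w: "w \<in> S"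
    have "inf ?Q (p w *\<^sub>R w) = 0"
      by (rule disj_sum[OF fin]) (use tp w cross in \<open>auto simp: inf_commute\<close>)
    then show "inf (p w *\<^sub>R w) ?Q = 0" by (simp add: inf_commute)
  qed (use tp P0 in auto)
  then have Pz: "?P = 0" using PQ by simp
  then have Qz: "?Q = 0" using PQ by simp
  have single: "f v *\<^sub>R v \<le> (\<Sum>w\<in>S. f w *\<^sub>R w)" if "\<And>w. w \<in> S \<Longrightarrow> 0 \<le> f w *\<^sub>R w" for f
  proof -
    have "(\<Sum>w\<in>S. f w *\<^sub>R w) = f v *\<^sub>R v + (\<Sum>w\<in>S - {v}. f w *\<^sub>R w)"
      using fin v by (simp add: sum.remove)
    moreover have "0 \<le> (\<Sum>w\<in>S - {v}. f w *\<^sub>R w)" using that by (intro sum_nonneg) auto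
    ultimately show ?thesis by simp
  qed
  have "p v *\<^sub>R v = 0"
    using single[of p] tp Pz tp[OF v] by (auto intro: antisym)
  then have "p v = 0" using w0[OF v] by simp
  moreover have "q v *\<^sub>R v = 0"
    using single[of q] tp Qz tp[OF v] by (auto intro: antisym)
  then have "q v = 0" using w0[OF v] by simp
  ultimately show "u v = 0" using pq[of v] by simp
qed

lemma findim_no_disj:
  assumes fd: "fin_dim_space TYPE('a::banach_lattice)"
  shows "\<not> has_disj_seq TYPE('a)"
proof
  assume "has_disj_seq TYPE('a)"
  then obtain d :: "nat \<Rightarrow> 'a" where d: "\<And>n. 0 \<le> d n" "\<And>n. d n \<noteq> 0"
    "\<And>m n. m < n \<Longrightarrow> inf (d m) (d n) = 0"
    unfolding has_disj_seq_def by blast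
  obtain B :: "'a set" where B: "finite B" "span B = UNIV" using fd unfolding fin_dim_space_def by blast
  have dd: "inf (d m) (d n) = 0" if "m \<noteq> n" for m n
    using d(3)[of m n] d(3)[of n m] that by (cases "m < n") (auto simp: inf_commute)
  have inj: "inj d"
  proof (rule injI)
    fix m n assume "d m = d n"
    show "m = n"
    proof (rule ccontr)
      assume "m \<noteq> n"
      then have "inf (d m) (d n) = 0" by (rule dd)
      with \<open>d m = d n\<close> d(2)[of n] show False by simp
    qed
  qed
  have "pdisj (range d)" unfolding pdisj_def
  proof (intro ballI impI)
    fix p q assume "p \<in> range d" "q \<in> range d" "p \<noteq> q"
    then obtain m n where "p = d m" "q = d n" "m \<noteq> n" by auto
    then show "inf p q = 0" using dd by simp
  qed
  then have "independent (range d)" using d by (intro pdisj_independent) auto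
  then have "finite (range d)" using independent_span_bound[OF B(1)] B(2) by blast
  then have "finite (UNIV :: nat set)" using inj by (rule finite_imageD)
  then show False by simp
qed

lemma findim_dp:
  assumes fd: "fin_dim_space TYPE('a::banach_lattice)"
  shows "uaw_dunford_pettis (id :: 'a \<Rightarrow> 'a)"
  unfolding uaw_dunford_pettis_def
proof (intro conjI allI impI)
  show "bounded_linear (id :: 'a \<Rightarrow> 'a)" by (simp add: id_def bounded_linear_ident)
  fix x :: "nat \<Rightarrow> 'a"
  assume bd: "bounded (range x)" and uaw: "uaw_tendsto x 0"
  have nd: "\<not> has_disj_seq TYPE('a)" by (rule findim_no_disj[OF fd])
  obtain A :: "'a set" where A: "finite A" "\<forall>a\<in>A. atom a" "pdisj A" "\<forall>e. atom e \<longrightarrow> (\<exists>a\<in>A. inf e a \<noteq> 0)"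
    using max_family[OF nd] by blast
  have a0: "0 \<le> a" "a \<noteq> 0" if "a \<in> A" for a using A(2) that unfolding atom_def by auto
  have dec: "w = (\<Sum>a\<in>A. cf a w *\<^sub>R a)" if "0 \<le> w" for w by (rule decomp[OF nd A that])
  have sp: "span A = UNIV" by (rule span_of_decomp[OF A(1) dec])
  have ind: "independent A" using a0 A(3) by (intro pdisj_independent) auto
  have rep_pos: "representation A w a = cf a w" if "0 \<le> w" "a \<in> A" for w a
  proof -
    have "(\<Sum>b\<in>A. representation A w b *\<^sub>R b) = w"
      using ind sp A(1) by (intro sum_representation_eq) auto
    then have "(\<Sum>b\<in>A. (representation A w b - cf b w) *\<^sub>R b) = 0"
      using dec[OF that(1)] by (simp add: scaleR_diff_left sum_subtractf)
    moreover have "\<forall>u. (\<Sum>v\<in>A. u v *\<^sub>R v) = 0 \<longrightarrow> (\<forall>v\<in>A. u v = 0)"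
      using ind A(1) unfolding independent_explicit_finite_subsets by blast
    ultimately have "\<forall>v\<in>A. representation A w v - cf v w = 0"
      using spec[of _ "\<lambda>b. representation A w b - cf b w"] by blast
    then show ?thesis using that(2) by simp
  qed
  have cfb: "cf a w \<le> norm w / norm a" if "0 \<le> w" "a \<in> A" for w a
    using cf_props(3)[OF that(1) a0[OF that(2)]] a0[OF that(2)] by (simp add: pos_le_divide_eq)
  have phi_bl: "bounded_linear (\<lambda>v. representation A v a)" if a: "a \<in> A" for a
  proof (rule bounded_linear_intro)
    fix v w :: 'a show "representation A (v + w) a = representation A v a + representation A w a"
      using representation_add[OF ind, of w v] sp by simp
  next
    fix r and v :: 'a show "representation A (r *\<^sub>R v) a = r *\<^sub>R representation A v a"
      using representation_scale[OF ind, of v r] sp by simp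
  next
    fix v :: 'a
    have dv: "v = sup v 0 - sup (- v) 0" by (rule pos_neg_decomp)
    have "representation A v a = representation A (sup v 0) a - representation A (sup (- v) 0) a"
      using representation_diff[OF ind, of "sup (- v) 0" "sup v 0"] sp dv by simp
    also have "\<dots> = cf a (sup v 0) - cf a (sup (- v) 0)" using rep_pos a by simp
    finally have r: "representation A v a = cf a (sup v 0) - cf a (sup (- v) 0)" .
    have n1: "norm (sup v 0) \<le> norm v"
    proof -
      have "norm (sup v 0) \<le> norm (lmod v)" using lmod_ge1 lmod_nonneg by (intro norm_mono_pos) auto
      then show ?thesis by (simp add: norm_lmod)
    qed
    have n2: "norm (sup (- v) 0) \<le> norm v"
    proof -
      have "norm (sup (- v) 0) \<le> norm (lmod v)" using lmod_ge2 lmod_nonneg by (intro norm_mono_pos) auto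
      then show ?thesis by (simp add: norm_lmod)
    qed
    have na: "norm a > 0" using a0[OF a] by simp
    have c1: "0 \<le> cf a (sup v 0)" "cf a (sup v 0) \<le> norm v / norm a"
    proof -
      show "0 \<le> cf a (sup v 0)" using cf_props(2)[of "sup v 0" a] a0[OF a] by simp
      have "norm (sup v 0) / norm a \<le> norm v / norm a" using n1 na by (simp add: divide_right_mono)
      then show "cf a (sup v 0) \<le> norm v / norm a" using cfb[of "sup v 0" a] a by simp
    qed
    have c2: "0 \<le> cf a (sup (- v) 0)" "cf a (sup (- v) 0) \<le> norm v / norm a"
    proof -
      show "0 \<le> cf a (sup (- v) 0)" using cf_props(2)[of "sup (- v) 0" a] a0[OF a] by simp
      have "norm (sup (- v) 0) / norm a \<le> norm v / norm a" using n2 na by (simp add: divide_right_mono)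
      then show "cf a (sup (- v) 0) \<le> norm v / norm a" using cfb[of "sup (- v) 0" a] a by simp
    qed
    have "norm (representation A v a) \<le> norm v / norm a" using r c1 c2 by auto
    also have "\<dots> = norm v * (1 / norm a)" by simp
    finally show "norm (representation A v a) \<le> norm v * (1 / norm a)" .
  qed
  obtain M where M: "\<And>n. norm (x n) \<le> M" using bd unfolding bounded_iff by blast
  have M0: "0 \<le> M" using M[of 0] norm_ge_zero[of "x 0"] by linarith
  define w where "w n = lmod (x n)" for n
  have w0: "0 \<le> w n" for n unfolding w_def by (rule lmod_nonneg)
  have nw: "norm (w n) = norm (x n)" for n unfolding w_def by (rule norm_lmod)
  define u where "u = (\<Sum>a\<in>A. (M / norm a) *\<^sub>R a)"
  have wu: "w n \<le> u" for n
  proof -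
    have "w n = (\<Sum>a\<in>A. cf a (w n) *\<^sub>R a)" by (rule dec[OF w0])
    also have "\<dots> \<le> u" unfolding u_def
    proof (rule sum_mono)
      fix a assume a: "a \<in> A"
      have "cf a (w n) \<le> norm (w n) / norm a" by (rule cfb[OF w0 a])
      also have "\<dots> \<le> M / norm a" using nw[of n] M[of n] by (simp add: divide_right_mono)
      finally show "cf a (w n) *\<^sub>R a \<le> (M / norm a) *\<^sub>R a" using a0[OF a] by (intro scaleR_right_mono)
    qed
    finally show ?thesis .
  qed
  have u0: "0 \<le> u" using w0[of 0] wu[of 0] by simp
  have "weakly_tendsto (\<lambda>n. inf (lmod (x n - 0)) u) 0" using uaw u0 unfolding uaw_tendsto_def by blast
  moreover have "inf (lmod (x n - 0)) u = w n" for n using wu[of n] unfolding w_def by (simp add: inf_absorb1)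
  ultimately have wt: "weakly_tendsto w 0" by simp
  have cft: "(\<lambda>n. cf a (w n)) \<longlonglongrightarrow> 0" if a: "a \<in> A" for a
  proof -
    have "(\<lambda>n. representation A (w n) a) \<longlonglongrightarrow> representation A 0 a"
      using wt phi_bl[OF a] unfolding weakly_tendsto_def by blast
    then show ?thesis using rep_pos[OF w0 a] by (simp add: representation_zero)
  qed
  have g: "(\<lambda>n. \<Sum>a\<in>A. cf a (w n) * norm a) \<longlonglongrightarrow> 0"
    using cft by (auto intro!: tendsto_null_sum tendsto_mult_left_zero)
  have le: "norm (norm (x n)) \<le> (\<Sum>a\<in>A. cf a (w n) * norm a)" for n
  proof -
    have "norm (x n) = norm (\<Sum>a\<in>A. cf a (w n) *\<^sub>R a)" using nw[of n] dec[OF w0[of n]] by simp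
    also have "\<dots> \<le> (\<Sum>a\<in>A. norm (cf a (w n) *\<^sub>R a))" by (rule norm_sum)
    also have "\<dots> = (\<Sum>a\<in>A. cf a (w n) * norm a)"
      using cf_props(2)[OF w0] a0 by (intro sum.cong) auto
    finally show ?thesis by simp
  qed
  have "(\<lambda>n. norm (x n)) \<longlonglongrightarrow> 0"
    by (rule Lim_null_comparison[OF always_eventually[OF allI[OF le]] g])
  then show "(\<lambda>n. norm (id (x n))) \<longlonglongrightarrow> 0" by simp
qed

theorem corollary2p27:
  shows "uaw_dunford_pettis (id :: 'a::banach_lattice \<Rightarrow> 'a) \<longleftrightarrow> fin_dim_space TYPE('a)"
proof
  assume H: "uaw_dunford_pettis (id :: 'a \<Rightarrow> 'a)"
  have nd: "\<not> has_disj_seq TYPE('a)" by (rule dp_no_disj[OF H])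
  obtain A :: "'a set" where A: "finite A" "\<forall>a\<in>A. atom a" "pdisj A" "\<forall>e. atom e \<longrightarrow> (\<exists>a\<in>A. inf e a \<noteq> 0)"
    using max_family[OF nd] by blast
  have dec: "w = (\<Sum>a\<in>A. cf a w *\<^sub>R a)" if "0 \<le> w" for w :: 'a by (rule decomp[OF nd A that])
  have "span A = UNIV" by (rule span_of_decomp[OF A(1) dec])
  then show "fin_dim_space TYPE('a)" unfolding fin_dim_space_def using A(1) by blast
next
  assume "fin_dim_space TYPE('a)"
  then show "uaw_dunford_pettis (id :: 'a \<Rightarrow> 'a)" by (rule findim_dp)
qed

end
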